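(* Let $X$ and $Y$ be discrete random variables taking values in a finite set $\mathcal{A}$ with $|\mathcal{A}| = M \ge 2$, and suppose $d_{\mathrm{TV}}(X,Y) > 0$. Define $$\alpha \triangleq \frac{d_{\mathrm{loc}}(X,Y)}{d_{\mathrm{TV}}(X,Y)}$$ (so that $\alpha \in [\tfrac{2}{M}, 1]$). Then $$|H(X)-H(Y)| \le d_{\mathrm{TV}}(X,Y)\,\log(M\alpha - 1) + h\bigl(d_{\mathrm{TV}}(X,Y)\bigr).$$ Furthermore, if the probability mass functions satisfy $P_Y(a) \ge \tfrac12 P_X(a)$ and $P_X(a) \ge \tfrac12 P_Y(a)$ for every $a \in \mathcal{A}$ (i.e., $P_X$ and $P_Y$ have the same support and $\tfrac12 \le P_X(a)/P_Y(a) \le 2$ on it), then the bound tightens to $$|H(X)-H(Y)| \le d_{\mathrm{TV}}(X,Y)\,\log\Bigl(\frac{M\alpha - 1}{4}\Bigr) + h\bigl(d_{\mathrm{TV}}(X,Y)\bigr).$$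
   Context: For discrete random variables $X,Y$ on a set $\mathcal{A}$ with probability mass functions $P_X,P_Y$, the local distance is $d_{\mathrm{loc}}(X,Y) = \sup_{u\in\mathcal{A}} |P_X(u)-P_Y(u)|$ and the total variation distance is $d_{\mathrm{TV}}(X,Y) = \frac12\sum_{u\in\mathcal{A}}|P_X(u)-P_Y(u)|$. All logarithms are natural and entropies are in nats: $H(X) = -\sum_u P_X(u)\log P_X(u)$ with $0\log 0 = 0$. $h(x) = -x\log x-(1-x)\log(1-x)$ denotes the binary entropy function on $[0,1]$. *)

theory Defs
  imports Complex_Main
begin

definition is_pmf_on :: "'a set \<Rightarrow> ('a \<Rightarrow> real) \<Rightarrow> bool" where
  "is_pmf_on A P \<longleftrightarrow> (\<forall>u\<in>A. P u \<ge> 0) \<and> (\<Sum>u\<in>A. P u) = 1"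

definition d_loc :: "'a set \<Rightarrow> ('a \<Rightarrow> real) \<Rightarrow> ('a \<Rightarrow> real) \<Rightarrow> real" where
  "d_loc A P Q = (SUP u\<in>A. \<bar>P u - Q u\<bar>)"

definition d_TV :: "'a set \<Rightarrow> ('a \<Rightarrow> real) \<Rightarrow> ('a \<Rightarrow> real) \<Rightarrow> real" where
  "d_TV A P Q = (1/2) * (\<Sum>u\<in>A. \<bar>P u - Q u\<bar>)"

text \<open>Entropy in nats; note ln 0 = 0 in Isabelle, so 0 log 0 = 0.\<close>
definition entropy :: "'a set \<Rightarrow> ('a \<Rightarrow> real) \<Rightarrow> real" where
  "entropy A P = - (\<Sum>u\<in>A. P u * ln (P u))"

definition bin_entropy :: "real \<Rightarrow> real" where
  "bin_entropy x = - x * ln x - (1 - x) * ln (1 - x)"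

end

theory Submission imports Defs "HOL-Analysis.Analysis" begin

lemma lnA: fixes t::real assumes "0 \<le> t" "t \<le> 1" shows "t * ln 2 \<le> ln (1 + t)"
proof -
  have "(1 - t) * ln 1 + t * ln 2 \<le> ln ((1 - t) *\<^sub>R 1 + t *\<^sub>R (2::real))"
    by (rule concave_onD[OF ln_concave]) (use assms in auto)
  moreover have "(1 - t) *\<^sub>R 1 + t *\<^sub>R (2::real) = 1 + t" by simp
  ultimately show ?thesis by (simp add: add.commute)
qed

lemma lnB: fixes m d :: real assumes "m \<ge> 0" "d > 0"
  shows "-(m+d) * ln (m+d) + m * ln m \<le> - d * ln d"
proof (cases "m = 0")
  case True then show ?thesis by simp
next
  case False
  then have "m > 0" using assms by simp
  have "ln m \<le> ln (m+d)" "ln d \<le> ln (m+d)" using \<open>m>0\<close> assms by auto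
  then have "m * ln m \<le> m * ln (m+d)" "d * ln d \<le> d * ln (m+d)"
    using \<open>m>0\<close> assms by (auto intro: mult_left_mono)
  then show ?thesis by (simp add: algebra_simps)
qed

lemma lnC: fixes m d :: real assumes "m \<ge> d" "d > 0"
  shows "-(m+d) * ln (m+d) + m * ln m \<le> - d * ln d - 2 * d * ln 2"
proof -
  have m: "m > 0" using assms by simp
  have "(d/m) * ln 2 \<le> ln (1 + d/m)" using assms m by (intro lnA) auto
  also have "1 + d/m = (m+d)/m" using m by (simp add: field_simps)
  also have "ln ((m+d)/m) = ln (m+d) - ln m"
    using m assms by (simp add: ln_div)
  finally have "d * ln 2 \<le> m * (ln (m+d) - ln m)" using m
    by (simp add: field_simps)
  moreover have "ln (2*d) \<le> ln (m+d)" using assms by auto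
  then have "d * (ln 2 + ln d) \<le> d * ln (m+d)" using assms by (simp add: ln_mult)
  ultimately show ?thesis by (simp add: algebra_simps)
qed

lemma lnD: fixes m e d :: real assumes "m \<ge> 0" "e > 0" "d > 0" "d \<le> 1" "m > 0 \<Longrightarrow> d < 1"
  shows "-(m+e) * ln (m+e) + m * ln m \<ge> - e * ln (e/d) + m * ln (1-d)"
proof (cases "m = 0")
  case True
  have "ln d \<le> 0" using assms by simp
  then show ?thesis using True assms by (simp add: ln_div algebra_simps mult_nonneg_nonpos)
next
  case False
  then have m: "m > 0" using assms by simp
  have d1: "d < 1" using assms m by simp
  define s where "s = m + e"
  have s: "s > 0" using m assms by (simp add: s_def)
  have g: "x * ln (y/x) \<le> y - x" if "x > 0" "y > 0" for x y :: real
  proof -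
    have "ln (y/x) \<le> y/x - 1" using that by (intro ln_le_minus_one) simp
    then have "x * ln (y/x) \<le> x * (y/x - 1)" using that by (intro mult_left_mono) auto
    also have "x * (y/x - 1) = y - x" using that by (simp add: field_simps)
    finally show ?thesis .
  qed
  have 1: "m * ln ((1-d)* s/m) \<le> (1-d)* s - m" using g m s d1 by simp
  have 2: "e * ln (d* s/e) \<le> d* s - e" using g assms s by simp
  have l1: "ln ((1-d)* s/m) = ln (1-d) + ln s - ln m" using m s d1 by (simp add: ln_div ln_mult)
  have l2: "ln (d* s/e) = ln d + ln s - ln e" using assms s by (simp add: ln_div ln_mult)
  have l3: "ln (e/d) = ln e - ln d" using assms by (simp add: ln_div)
  from 1 2 show ?thesis unfolding l1 l2 l3 s_def[symmetric] by (simp add: algebra_simps s_def)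
qed

lemma lnE: fixes x d k :: real assumes "x > 0" "d > 0" "k > 0"
  shows "- x * ln x \<le> d/k - x + x * ln k - x * ln d"
proof -
  have "ln (d/(x*k)) \<le> d/(x*k) - 1" using assms by (intro ln_le_minus_one) simp
  then have "x * ln (d/(x*k)) \<le> x * (d/(x*k) - 1)" using assms by (intro mult_left_mono) auto
  moreover have "ln (d/(x*k)) = ln d - ln x - ln k" using assms by (simp add: ln_div ln_mult)
  then have "x * ln (d/(x*k)) = x * (ln d - ln x - ln k)" by simp
  then have "x * ln (d/(x*k)) = x * ln d - x * ln x - x * ln k" by (simp add: right_diff_distrib)
  moreover have "x * (d/(x*k) - 1) = d/k - x" using assms by (simp add: field_simps)
  ultimately show ?thesis by (simp add: algebra_simps)
qed

lemma one_side:
  fixes A :: "'a set" and P Q :: "'a \<Rightarrow> real" and M :: nat and b :: real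
  assumes fin: "finite A" and cardA: "card A = M"
    and pP: "is_pmf_on A P" and pQ: "is_pmf_on A Q"
    and dpos: "d_TV A P Q > 0"
    and hb: "\<And>u. u \<in> A \<Longrightarrow> Q u < P u \<Longrightarrow>
       -(P u) * ln (P u) + Q u * ln (Q u) \<le> -(P u - Q u) * ln (P u - Q u) - b * (P u - Q u)"
  shows "real M * (d_loc A P Q / d_TV A P Q) - 1 > 0 \<and>
    entropy A P - entropy A Q \<le> d_TV A P Q * ln (real M * (d_loc A P Q / d_TV A P Q) - 1)
        - b * d_TV A P Q + bin_entropy (d_TV A P Q)"
proof -
  define d where "d = d_TV A P Q"
  define dl where "dl = d_loc A P Q"
  define a where "a = dl / d"
  define Sp where "Sp = {u\<in>A. Q u < P u}"
  define Sm where "Sm = {u\<in>A. P u < Q u}"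
  define k where "k = card Sp"
  have d0: "d > 0" using dpos d_def by simp
  have finSp: "finite Sp" and finSm: "finite Sm" using fin by (auto simp: Sp_def Sm_def)
  have P0: "\<And>u. u \<in> A \<Longrightarrow> P u \<ge> 0" and sP: "(\<Sum>u\<in>A. P u) = 1" using pP by (auto simp: is_pmf_on_def)
  have Q0: "\<And>u. u \<in> A \<Longrightarrow> Q u \<ge> 0" and sQ: "(\<Sum>u\<in>A. Q u) = 1" using pQ by (auto simp: is_pmf_on_def)
  have spl: "(\<Sum>u\<in>A. g u) = (\<Sum>u\<in>Sp. g u) + (\<Sum>u\<in>Sm. g u)"
    if "\<And>u. u \<in> A \<Longrightarrow> P u = Q u \<Longrightarrow> g u = 0" for g :: "'a \<Rightarrow> real"
  proof -
    have "(\<Sum>u\<in>A. g u) = (\<Sum>u\<in>A. (if Q u < P u then g u else 0) + (if P u < Q u then g u else 0))"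
      by (rule sum.cong) (use that in auto)
    also have "\<dots> = (\<Sum>u\<in>Sp. g u) + (\<Sum>u\<in>Sm. g u)"
      unfolding sum.distrib Sp_def Sm_def using fin by (simp add: sum.inter_filter)
    finally show ?thesis .
  qed
  have e1: "(\<Sum>u\<in>A. \<bar>P u - Q u\<bar>) = (\<Sum>u\<in>Sp. P u - Q u) + (\<Sum>u\<in>Sm. Q u - P u)"
  proof -
    have "(\<Sum>u\<in>A. \<bar>P u - Q u\<bar>) = (\<Sum>u\<in>Sp. \<bar>P u - Q u\<bar>) + (\<Sum>u\<in>Sm. \<bar>P u - Q u\<bar>)"
      by (rule spl) simp
    also have "\<dots> = (\<Sum>u\<in>Sp. P u - Q u) + (\<Sum>u\<in>Sm. Q u - P u)"
      by (intro arg_cong2[where f="(+)"] sum.cong) (auto simp: Sp_def Sm_def)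
    finally show ?thesis .
  qed
  have e2: "(\<Sum>u\<in>A. P u - Q u) = (\<Sum>u\<in>Sp. P u - Q u) - (\<Sum>u\<in>Sm. Q u - P u)"
  proof -
    have "(\<Sum>u\<in>A. P u - Q u) = (\<Sum>u\<in>Sp. P u - Q u) + (\<Sum>u\<in>Sm. P u - Q u)"
      by (rule spl) simp
    also have "(\<Sum>u\<in>Sm. P u - Q u) = - (\<Sum>u\<in>Sm. Q u - P u)"
      by (simp add: sum_negf[symmetric])
    finally show ?thesis by simp
  qed
  have e3: "(\<Sum>u\<in>A. P u - Q u) = 0" using sP sQ by (simp add: sum_subtractf)
  have dd: "d = (1/2) * (\<Sum>u\<in>A. \<bar>P u - Q u\<bar>)" using d_def d_TV_def by simp
  have sSp: "(\<Sum>u\<in>Sp. P u - Q u) = d" and sSm: "(\<Sum>u\<in>Sm. Q u - P u) = d"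
    using e1 e2 e3 dd by linarith+
  have smin: "(\<Sum>u\<in>A. min (P u) (Q u)) = 1 - d"
  proof -
    have "(\<Sum>u\<in>A. min (P u) (Q u)) = (\<Sum>u\<in>A. (P u + Q u - \<bar>P u - Q u\<bar>) / 2)"
      by (rule sum.cong) (auto simp: min_def)
    also have "\<dots> = ((\<Sum>u\<in>A. P u) + (\<Sum>u\<in>A. Q u) - (\<Sum>u\<in>A. \<bar>P u - Q u\<bar>)) / 2"
      by (simp add: sum_divide_distrib[symmetric] sum_subtractf sum.distrib)
    finally show ?thesis using sP sQ dd by simp
  qed
  have min0: "\<And>u. u \<in> A \<Longrightarrow> min (P u) (Q u) \<ge> 0" using P0 Q0 by simp
  have d1: "d \<le> 1" using smin sum_nonneg[of A "\<lambda>u. min (P u) (Q u)"] min0 by simp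
  have minle: "min (P u) (Q u) \<le> 1 - d" if "u \<in> A" for u
    using member_le_sum[of u A "\<lambda>u. min (P u) (Q u)", OF that] min0 fin smin by simp
  have sSmP: "(\<Sum>u\<in>Sm. P u) \<le> 1 - d"
  proof -
    have "(\<Sum>u\<in>Sm. P u) = (\<Sum>u\<in>Sm. min (P u) (Q u))"
      by (rule sum.cong) (auto simp: Sm_def)
    also have "\<dots> \<le> (\<Sum>u\<in>A. min (P u) (Q u))"
      by (rule sum_mono2) (use fin min0 in \<open>auto simp: Sm_def\<close>)
    finally show ?thesis using smin by simp
  qed
  have dlu: "\<bar>P u - Q u\<bar> \<le> dl" if "u \<in> A" for u
    unfolding dl_def d_loc_def
    by (rule cSUP_upper[OF that]) (use fin in \<open>simp add: bdd_above_finite\<close>)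
  have Spne: "Sp \<noteq> {}" using sSp d0 by auto
  then obtain u0 where u0: "u0 \<in> Sp" by auto
  have dlpos: "dl > 0" using dlu[of u0] u0 by (auto simp: Sp_def)
  have apos: "a > 0" using dlpos d0 a_def by simp
  have dla: "dl = a * d" using a_def d0 by simp
  have k1: "k \<ge> 1" using Spne finSp k_def by (simp add: Suc_le_eq card_gt_0_iff)
  have cSm: "real (card Sm) * a \<ge> 1"
  proof -
    have "d \<le> (\<Sum>u\<in>Sm. dl)" unfolding sSm[symmetric]
      by (rule sum_mono) (use dlu in \<open>force simp: Sm_def\<close>)
    then have "d \<le> real (card Sm) * (a * d)" using dla by simp
    then have "d * 1 \<le> d * (real (card Sm) * a)" by (simp add: algebra_simps)
    then show ?thesis using d0 by (simp only: mult_le_cancel_left_pos)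
  qed
  have ckM: "k + card Sm \<le> M"
  proof -
    have "k + card Sm = card (Sp \<union> Sm)" unfolding k_def
      by (rule card_Un_disjoint[symmetric]) (use finSp finSm in \<open>auto simp: Sp_def Sm_def\<close>)
    also have "\<dots> \<le> card A" by (rule card_mono[OF fin]) (auto simp: Sp_def Sm_def)
    finally show ?thesis using cardA by simp
  qed
  have ka: "real k * a \<le> real M * a - 1"
  proof -
    have "real k + real (card Sm) \<le> real M" using ckM by linarith
    then have "(real k + real (card Sm)) * a \<le> real M * a" using apos by (intro mult_right_mono) auto
    then show ?thesis using cSm by (simp add: algebra_simps)
  qed
  have kapos: "real k * a > 0" using k1 apos by simp
  have ent: "entropy A P - entropy A Q =
     (\<Sum>u\<in>Sp. -(P u) * ln (P u) + Q u * ln (Q u)) + (\<Sum>u\<in>Sm. -(P u) * ln (P u) + Q u * ln (Q u))"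
  proof -
    have "entropy A P - entropy A Q = (\<Sum>u\<in>A. -(P u) * ln (P u) + Q u * ln (Q u))"
      unfolding entropy_def by (simp add: sum.distrib sum_negf sum_subtractf)
    also have "\<dots> = (\<Sum>u\<in>Sp. -(P u) * ln (P u) + Q u * ln (Q u)) + (\<Sum>u\<in>Sm. -(P u) * ln (P u) + Q u * ln (Q u))"
      by (rule spl) simp
    finally show ?thesis .
  qed
  have bSp: "(\<Sum>u\<in>Sp. -(P u) * ln (P u) + Q u * ln (Q u)) \<le> d * ln (real k) - d * ln d - b * d"
  proof -
    have "(\<Sum>u\<in>Sp. -(P u) * ln (P u) + Q u * ln (Q u)) \<le>
          (\<Sum>u\<in>Sp. d / real k - (P u - Q u) + (P u - Q u) * ln (real k) - (P u - Q u) * ln d - b * (P u - Q u))"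
    proof (rule sum_mono)
      fix u assume u: "u \<in> Sp"
      have "-(P u) * ln (P u) + Q u * ln (Q u) \<le> -(P u - Q u) * ln (P u - Q u) - b * (P u - Q u)"
        using hb u by (auto simp: Sp_def)
      also have "-(P u - Q u) * ln (P u - Q u) \<le> d / real k - (P u - Q u) + (P u - Q u) * ln (real k) - (P u - Q u) * ln d"
        by (rule lnE) (use u d0 k1 in \<open>auto simp: Sp_def\<close>)
      finally show "-(P u) * ln (P u) + Q u * ln (Q u) \<le> d / real k - (P u - Q u) + (P u - Q u) * ln (real k) - (P u - Q u) * ln d - b * (P u - Q u)"
        by simp
    qed
    also have "\<dots> = real k * (d / real k) - (\<Sum>u\<in>Sp. P u - Q u) + (\<Sum>u\<in>Sp. P u - Q u) * ln (real k)
        - (\<Sum>u\<in>Sp. P u - Q u) * ln d - b * (\<Sum>u\<in>Sp. P u - Q u)"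
      by (simp add: sum.distrib sum_subtractf sum_distrib_left[symmetric] sum_distrib_right[symmetric] k_def)
    also have "\<dots> = d * ln (real k) - d * ln d - b * d" using k1 sSp by simp
    finally show ?thesis .
  qed
  have bSm: "(\<Sum>u\<in>Sm. -(P u) * ln (P u) + Q u * ln (Q u)) \<le> d * ln a - (1 - d) * ln (1 - d)"
  proof -
    have "(\<Sum>u\<in>Sm. -(P u) * ln (P u) + Q u * ln (Q u)) \<le>
          (\<Sum>u\<in>Sm. (Q u - P u) * ln a - P u * ln (1 - d))"
    proof (rule sum_mono)
      fix u assume u: "u \<in> Sm"
      have uA: "u \<in> A" and lt: "P u < Q u" using u by (auto simp: Sm_def)
      have "- (Q u - P u) * ln ((Q u - P u)/d) + P u * ln (1-d) \<le>
            -(P u + (Q u - P u)) * ln (P u + (Q u - P u)) + P u * ln (P u)"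
      proof (rule lnD)
        show "P u > 0 \<Longrightarrow> d < 1" using minle[OF uA] lt by simp
      qed (use P0[OF uA] lt d0 d1 in auto)
      moreover have "ln ((Q u - P u)/d) \<le> ln a"
      proof -
        have "(Q u - P u) \<le> a * d" using dlu[OF uA] dla lt by simp
        then have "(Q u - P u)/d \<le> a" using d0 by (simp add: divide_le_eq)
        then show ?thesis using lt d0 apos by simp
      qed
      then have "(Q u - P u) * ln ((Q u - P u)/d) \<le> (Q u - P u) * ln a"
        using lt by (intro mult_left_mono) auto
      ultimately show "-(P u) * ln (P u) + Q u * ln (Q u) \<le> (Q u - P u) * ln a - P u * ln (1 - d)"
        by (simp add: left_diff_distrib)
    qed
    also have "\<dots> = d * ln a - (\<Sum>u\<in>Sm. P u) * ln (1 - d)"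
      using sSm by (simp add: sum_subtractf sum_distrib_right[symmetric])
    also have "\<dots> \<le> d * ln a - (1 - d) * ln (1 - d)"
    proof -
      have "ln (1 - d) \<le> 0"
      proof (cases "d = 1")
        case False
        then have "0 < 1 - d" using d1 by simp
        then show ?thesis using ln_le_minus_one[of "1-d"] d0 by simp
      qed simp
      then have "(1 - d) * ln (1 - d) \<le> (\<Sum>u\<in>Sm. P u) * ln (1 - d)"
        using sSmP by (intro mult_right_mono_neg) auto
      then show ?thesis by simp
    qed
    finally show ?thesis .
  qed
  have lnka: "ln (real k * a) \<le> ln (real M * a - 1)" using ka kapos by simp
  have lnka2: "ln (real k * a) = ln (real k) + ln a" using k1 apos by (simp add: ln_mult)
  have "entropy A P - entropy A Q \<le> d * ln (real k) - d * ln d - b * d + (d * ln a - (1 - d) * ln (1 - d))"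
    using ent bSp bSm by simp
  also have "\<dots> = d * ln (real k * a) - b * d + bin_entropy d"
    unfolding lnka2 bin_entropy_def by (simp add: algebra_simps)
  also have "\<dots> \<le> d * ln (real M * a - 1) - b * d + bin_entropy d"
    using lnka d0 by (simp add: mult_left_mono)
  finally show ?thesis using ka kapos unfolding a_def dl_def d_def by simp
qed

lemma dTV_sym: "d_TV A Q P = d_TV A P Q" unfolding d_TV_def by (simp add: abs_minus_commute)
lemma dloc_sym: "d_loc A Q P = d_loc A P Q" unfolding d_loc_def by (simp add: abs_minus_commute)

theorem theorem4:
  fixes A :: "'a set" and P Q :: "'a \<Rightarrow> real" and M :: nat
  assumes "finite A" and "card A = M" and "M \<ge> 2"
    and "is_pmf_on A P" and "is_pmf_on A Q"
    and "d_TV A P Q > 0"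
  defines "\<alpha> \<equiv> d_loc A P Q / d_TV A P Q"
  shows "\<bar>entropy A P - entropy A Q\<bar>
           \<le> d_TV A P Q * ln (real M * \<alpha> - 1) + bin_entropy (d_TV A P Q)
       \<and> ((\<forall>a\<in>A. Q a \<ge> P a / 2 \<and> P a \<ge> Q a / 2) \<longrightarrow>
         \<bar>entropy A P - entropy A Q\<bar>
           \<le> d_TV A P Q * ln ((real M * \<alpha> - 1) / 4) + bin_entropy (d_TV A P Q))"
proof -
  have dq: "d_TV A Q P > 0" using assms(6) dTV_sym by metis
  have r1: "real M * \<alpha> - 1 > 0 \<and> entropy A P - entropy A Q \<le> d_TV A P Q * ln (real M * \<alpha> - 1)
        - 0 * d_TV A P Q + bin_entropy (d_TV A P Q)"
    unfolding \<alpha>_def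
  proof (rule one_side[OF assms(1,2,4,5,6)])
    fix u assume u: "u \<in> A" "Q u < P u"
    have "Q u \<ge> 0" using assms(5) u(1) by (simp add: is_pmf_on_def)
    from lnB[OF this, of "P u - Q u"] u(2)
    show "- P u * ln (P u) + Q u * ln (Q u) \<le> - (P u - Q u) * ln (P u - Q u) - 0 * (P u - Q u)"
      by simp
  qed
  have r2: "real M * \<alpha> - 1 > 0 \<and> entropy A Q - entropy A P \<le> d_TV A P Q * ln (real M * \<alpha> - 1)
        - 0 * d_TV A P Q + bin_entropy (d_TV A P Q)"
  proof -
    have "real M * (d_loc A Q P / d_TV A Q P) - 1 > 0 \<and> entropy A Q - entropy A P \<le> d_TV A Q P * ln (real M * (d_loc A Q P / d_TV A Q P) - 1)
        - 0 * d_TV A Q P + bin_entropy (d_TV A Q P)"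
    proof (rule one_side[OF assms(1,2,5,4) dq])
      fix u assume u: "u \<in> A" "P u < Q u"
      have "P u \<ge> 0" using assms(4) u(1) by (simp add: is_pmf_on_def)
      from lnB[OF this, of "Q u - P u"] u(2)
      show "- Q u * ln (Q u) + P u * ln (P u) \<le> - (Q u - P u) * ln (Q u - P u) - 0 * (Q u - P u)"
        by simp
    qed
    then show ?thesis unfolding \<alpha>_def dTV_sym[of A Q P] dloc_sym[of A Q P] .
  qed
  have pos: "real M * \<alpha> - 1 > 0" using r1 by simp
  have l4: "ln ((real M * \<alpha> - 1) / 4) = ln (real M * \<alpha> - 1) - 2 * ln 2"
  proof -
    have "ln ((2::real)^2) = real 2 * ln 2" by (rule ln_realpow)
    then have "ln (4::real) = 2 * ln 2" by simp
    then show ?thesis using pos by (simp add: ln_div)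
  qed
  show ?thesis
  proof (intro conjI impI)
    show "\<bar>entropy A P - entropy A Q\<bar> \<le> d_TV A P Q * ln (real M * \<alpha> - 1) + bin_entropy (d_TV A P Q)"
      using r1 r2 by (simp add: abs_le_iff)
  next
    assume h: "\<forall>a\<in>A. Q a \<ge> P a / 2 \<and> P a \<ge> Q a / 2"
    have s1: "entropy A P - entropy A Q \<le> d_TV A P Q * ln (real M * \<alpha> - 1)
        - (2 * ln 2) * d_TV A P Q + bin_entropy (d_TV A P Q)"
      unfolding \<alpha>_def
    proof (rule conjunct2[OF one_side[OF assms(1,2,4,5,6)]])
      fix u assume u: "u \<in> A" "Q u < P u"
      have "Q u \<ge> P u / 2" using h u(1) by blast
      then have "P u - Q u \<le> Q u" by linarith
      from lnC[OF this] u(2)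
      show "- P u * ln (P u) + Q u * ln (Q u) \<le> - (P u - Q u) * ln (P u - Q u) - 2 * ln 2 * (P u - Q u)"
        by (simp add: algebra_simps)
    qed
    have s2: "entropy A Q - entropy A P \<le> d_TV A P Q * ln (real M * \<alpha> - 1)
        - (2 * ln 2) * d_TV A P Q + bin_entropy (d_TV A P Q)"
    proof -
      have "entropy A Q - entropy A P \<le> d_TV A Q P * ln (real M * (d_loc A Q P / d_TV A Q P) - 1)
        - (2 * ln 2) * d_TV A Q P + bin_entropy (d_TV A Q P)"
      proof (rule conjunct2[OF one_side[OF assms(1,2,5,4) dq]])
        fix u assume u: "u \<in> A" "P u < Q u"
        have "P u \<ge> Q u / 2" using h u(1) by blast
        then have "Q u - P u \<le> P u" by linarith
        from lnC[OF this] u(2)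
        show "- Q u * ln (Q u) + P u * ln (P u) \<le> - (Q u - P u) * ln (Q u - P u) - 2 * ln 2 * (Q u - P u)"
          by (simp add: algebra_simps)
      qed
      then show ?thesis unfolding \<alpha>_def dTV_sym[of A Q P] dloc_sym[of A Q P] .
    qed
    show "\<bar>entropy A P - entropy A Q\<bar> \<le> d_TV A P Q * ln ((real M * \<alpha> - 1) / 4) + bin_entropy (d_TV A P Q)"
      unfolding l4 using s1 s2 by (simp add: abs_le_iff right_diff_distrib mult.commute mult.left_commute)
  qed
qed

end
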